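(* Let $X$ be the subshift obtained from the marker construction described in the context. For each $x \in X$ and each $j \in \mathbb{N}$ there is a unique decomposition of $x$ into $\mathcal{C}_j$-words, i.e., there is a unique $r \in \{0,1,\dots,l_j-1\}$ such that $x_{[r+kl_j,\, r+(k+1)l_j)} \in \mathcal{C}_j$ for all $k \in \mathbb{Z}$.
   Context: Marker construction. Let $l_1$ be a sufficiently large perfect square and $N_1 = 2^{\sqrt{l_1}}$. Let $\mathcal{C}_1$ be a set of $N_1$ binary words of length $l_1$, each beginning with $001$, such that the word $00$ occurs in each element of $\mathcal{C}_1$ only as its prefix. Inductively, given a set $\mathcal{C}_j$ of $N_j$ distinct words of length $l_j$ with an ordering $\mathcal{C}_j = \{u_1^{(j)},\dots,u_{N_j}^{(j)}\}$, let $P_j = \{2\}\cup\{i^2 : 2 \le i \le \lfloor\sqrt{N_j}\rfloor\}$, and let $\mathcal{C}_{j+1}$ be the set of all words $u^{(j)}_{\pi(1)}u^{(j)}_{\pi(2)}\cdots u^{(j)}_{\pi(N_j)}$ where $\pi$ ranges over permutations of $\{1,\dots,N_j\}$ fixing every element outside $P_j$. Thus $N_{j+1} = (\lfloor\sqrt{N_j}\rfloor)!$ and $l_{j+1} = l_j N_j$. The ordering of $\mathcal{C}_{j+1}$ is arbitrary except that its first element $u^{(j+1)}_1$ is $u_1^{(j)}u_2^{(j)}\cdots u_{N_j}^{(j)}$. $X \subset \{0,1\}^{\mathbb{Z}}$ is the set of bi-infinite sequences each finite subword of which is a subword of some word in $\bigcup_j \mathcal{C}_j$. *)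

theory Defs
  imports Complex_Main "HOL-Combinatorics.Permutations"
begin

text \<open>Binary words are bool lists (False = 0, True = 1).\<close>

definition Pset :: "nat \<Rightarrow> nat set" where
  "Pset N = {2} \<union> {i^2 | i. 2 \<le> i \<and> i \<le> nat \<lfloor>sqrt (real N)\<rfloor>}"

text \<open>Given the ordered list us = [u_1,...,u_N] of level-j words, the set of level-(j+1) words.
  Positions are 1-indexed as in the paper: u_i = us ! (i - 1).\<close>
definition next_level :: "bool list list \<Rightarrow> bool list set" where
  "next_level us = {concat (map (\<lambda>i. us ! (\<pi> i - 1)) [1..<Suc (length us)]) | \<pi>.
      \<pi> permutes {1..length us} \<and> (\<forall>i. i \<notin> Pset (length us) \<longrightarrow> \<pi> i = i)}"

definition only_prefix_00 :: "bool list \<Rightarrow> bool" where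
  "only_prefix_00 w \<longleftrightarrow> (\<forall>i. Suc i < length w \<and> \<not> w ! i \<and> \<not> w ! Suc i \<longrightarrow> i = 0)"

text \<open>ord j is the ordered list of the words of C_j (j \<ge> 1); ord 0 is unused.\<close>
definition marker_system :: "nat \<Rightarrow> (nat \<Rightarrow> bool list list) \<Rightarrow> bool" where
  "marker_system l1 ord \<longleftrightarrow>
     (\<exists>k. l1 = k^2 \<and> length (ord 1) = 2^k) \<and>
     (\<forall>j\<ge>1. distinct (ord j)) \<and>
     (\<forall>w\<in>set (ord 1). length w = l1 \<and> take 3 w = [False, False, True] \<and> only_prefix_00 w) \<and>
     (\<forall>j\<ge>1. set (ord (Suc j)) = next_level (ord j) \<and> ord (Suc j) \<noteq> [] \<and>
              hd (ord (Suc j)) = concat (ord j))"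

definition lev_len :: "nat \<Rightarrow> (nat \<Rightarrow> bool list list) \<Rightarrow> nat \<Rightarrow> nat" where
  "lev_len l1 ord j = l1 * (\<Prod>i\<in>{1..<j}. length (ord i))"

definition seg :: "(int \<Rightarrow> bool) \<Rightarrow> int \<Rightarrow> nat \<Rightarrow> bool list" where
  "seg x a n = map (\<lambda>i. x (a + int i)) [0..<n]"

definition marker_subshift :: "(nat \<Rightarrow> bool list list) \<Rightarrow> (int \<Rightarrow> bool) set" where
  "marker_subshift ord = {x. \<forall>a n. \<exists>j\<ge>1. \<exists>w\<in>set (ord j). \<exists>p s. w = p @ seg x a n @ s}"

end

theory Submission
  imports Defs "HOL-Library.Infinite_Set"
begin

lemma seg_length[simp]: "length (seg x a n) = n"
  by (simp add: seg_def)

lemma seg_nth[simp]: "i < n \<Longrightarrow> seg x a n ! i = x (a + int i)"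
  by (simp add: seg_def)

lemma seg_sub: "t + l \<le> n \<Longrightarrow> seg x (a + int t) l = take l (drop t (seg x a n))"
  by (rule nth_equalityI) (auto simp: algebra_simps)

lemma concat_block:
  "(\<forall>v\<in>set ws. length v = l) \<Longrightarrow> i < length ws \<Longrightarrow> take l (drop (i*l) (concat ws)) = ws!i"
proof (induction ws arbitrary: i)
  case Nil then show ?case by simp
next
  case (Cons v ws)
  show ?case
  proof (cases i)
    case 0 then show ?thesis using Cons by simp
  next
    case (Suc i')
    have "drop (i*l) (concat (v#ws)) = drop (i'*l) (concat ws)"
      using Cons.prems Suc by simp
    then show ?thesis using Cons Suc by simp
  qed
qed

lemma length_concat_uniform:
  "(\<forall>v\<in>set ws. length v = l) \<Longrightarrow> length (concat ws) = length ws * l"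
  by (induction ws) auto

lemma seg_concat:
  assumes "\<forall>v\<in>set ws. length v = l" "seg x a (length ws * l) = concat ws" "i < length ws"
  shows "seg x (a + int (i*l)) l = ws!i"
proof -
  have "i*l + l \<le> length ws * l"
    using assms(3) by (metis add.commute mult_Suc less_eq_Suc_le mult_le_mono1)
  then have "seg x (a + int (i*l)) l = take l (drop (i*l) (seg x a (length ws * l)))"
    by (rule seg_sub)
  then show ?thesis using assms concat_block by simp
qed

lemma next_level_word:
  "w \<in> next_level us \<Longrightarrow> \<exists>\<pi>. \<pi> permutes {1..length us} \<and> (\<forall>i. i \<notin> Pset (length us) \<longrightarrow> \<pi> i = i)
     \<and> w = concat (map (\<lambda>i. us ! (\<pi> (Suc i) - 1)) [0..<length us])"
proof -
  assume "w \<in> next_level us"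
  then obtain \<pi> where p: "\<pi> permutes {1..length us}" "\<forall>i. i \<notin> Pset (length us) \<longrightarrow> \<pi> i = i"
    and w: "w = concat (map (\<lambda>i. us ! (\<pi> i - 1)) [1..<Suc (length us)])"
    unfolding next_level_def by blast
  have "[1..<Suc (length us)] = map Suc [0..<length us]" by (simp add: map_Suc_upt)
  then have "w = concat (map (\<lambda>i. us ! (\<pi> (Suc i) - 1)) [0..<length us])"
    using w by (simp only: map_map comp_def)
  then show ?thesis using p by blast
qed

lemma one_notin_Pset: "1 \<notin> Pset N"
proof
  assume "1 \<in> Pset N"
  then obtain i where "(1::nat) = i^2" "2 \<le> i" unfolding Pset_def by auto
  then show False by (metis le_square less_le_trans numeral_2_eq_2 less_2_cases_iff not_less power2_eq_square one_less_numeral_iff semiring_norm(76) le_less_trans)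
qed

lemma ms_nonempty: "marker_system l1 ord \<Longrightarrow> 1 \<le> j \<Longrightarrow> 1 \<le> length (ord j)"
proof -
  assume ms: "marker_system l1 ord" and j: "1 \<le> j"
  show ?thesis
  proof (cases "j = 1")
    case True
    then show ?thesis using ms unfolding marker_system_def by auto
  next
    case False
    then obtain i where "j = Suc i" "1 \<le> i" using j by (metis Suc_pred' le_neq_implies_less less_one not_less_eq_eq not_le)
    then show ?thesis using ms unfolding marker_system_def by (auto simp: Suc_le_eq)
  qed
qed

lemma lev_Suc: "1 \<le> j \<Longrightarrow> lev_len l1 ord (Suc j) = lev_len l1 ord j * length (ord j)"
  unfolding lev_len_def by (simp add: prod.atLeastLessThan_Suc)

lemma lev_1: "lev_len l1 ord 1 = l1"
  unfolding lev_len_def by simp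

lemma next_word_parts:
  assumes ms: "marker_system l1 ord" and j: "1 \<le> j" and w: "w \<in> set (ord (Suc j))"
  shows "\<exists>\<pi>. \<pi> permutes {1..length (ord j)} \<and> \<pi> 1 = 1 \<and>
     w = concat (map (\<lambda>i. ord j ! (\<pi> (Suc i) - 1)) [0..<length (ord j)]) \<and>
     (\<forall>i<length (ord j). \<pi> (Suc i) - 1 < length (ord j) \<and> 1 \<le> \<pi> (Suc i))"
proof -
  have "w \<in> next_level (ord j)" using ms j w unfolding marker_system_def by auto
  from next_level_word[OF this] obtain \<pi> where p: "\<pi> permutes {1..length (ord j)}"
    "\<forall>i. i \<notin> Pset (length (ord j)) \<longrightarrow> \<pi> i = i"
    "w = concat (map (\<lambda>i. ord j ! (\<pi> (Suc i) - 1)) [0..<length (ord j)])" by blast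
  have "\<pi> 1 = 1" using p(2) one_notin_Pset by blast
  moreover have "\<forall>i<length (ord j). \<pi> (Suc i) - 1 < length (ord j) \<and> 1 \<le> \<pi> (Suc i)"
  proof (intro allI impI)
    fix i assume "i < length (ord j)"
    then have "Suc i \<in> {1..length (ord j)}" by simp
    then have "\<pi> (Suc i) \<in> {1..length (ord j)}" using permutes_in_image[OF p(1)] by blast
    then show "\<pi> (Suc i) - 1 < length (ord j) \<and> 1 \<le> \<pi> (Suc i)" by auto
  qed
  ultimately show ?thesis using p by blast
qed

lemma ms_len: assumes ms: "marker_system l1 ord" and j: "1 \<le> j" shows "w \<in> set (ord j) \<Longrightarrow> length w = lev_len l1 ord j"
  using j
proof (induction j arbitrary: w rule: dec_induct)
  case base
  then show ?case using ms lev_1[of l1 ord] unfolding marker_system_def by auto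
next
  case (step j)
  from next_word_parts[OF ms step.hyps(1) step.prems(1)] obtain \<pi> where
    p: "w = concat (map (\<lambda>i. ord j ! (\<pi> (Suc i) - 1)) [0..<length (ord j)])"
       "\<forall>i<length (ord j). \<pi> (Suc i) - 1 < length (ord j) \<and> 1 \<le> \<pi> (Suc i)" by blast
  have "\<forall>v\<in>set (map (\<lambda>i. ord j ! (\<pi> (Suc i) - 1)) [0..<length (ord j)]). length v = lev_len l1 ord j"
    using p(2) step.IH by auto
  then have "length w = length (ord j) * lev_len l1 ord j"
    using p(1) length_concat_uniform by fastforce
  then show ?case using lev_Suc[OF step.hyps(1)] by simp
qed

lemma lev_pos: assumes ms: "marker_system l1 ord" and l: "0 < l1" and j: "1 \<le> j" shows "0 < lev_len l1 ord j"
  using j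
proof (induction j rule: dec_induct)
  case base then show ?case using l by (simp add: lev_len_def)
next
  case (step j)
  then show ?case using lev_Suc[OF step.hyps(1)] ms_nonempty[OF ms step.hyps(1)] by (auto simp: Suc_le_eq)
qed

lemma lev_mono: assumes ms: "marker_system l1 ord" and i: "1 \<le> i" and ij: "i \<le> j" shows "lev_len l1 ord i \<le> lev_len l1 ord j"
  using ij
proof (induction j rule: dec_induct)
  case base then show ?case by simp
next
  case (step j)
  have "1 \<le> j" using step.hyps i by simp
  then show ?case using lev_Suc[OF \<open>1 \<le> j\<close>] ms_nonempty[OF ms \<open>1 \<le> j\<close>] step.IH
    by (metis le_trans mult_le_mono2 nat_mult_1_right)
qed

lemma decomp: assumes ms: "marker_system l1 ord" and j: "1 \<le> j" and jj: "j \<le> j'"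
  shows "w \<in> set (ord j') \<Longrightarrow> \<exists>ws. w = concat ws \<and> set ws \<subseteq> set (ord j)"
  using jj
proof (induction j' arbitrary: w rule: dec_induct)
  case base
  then show ?case by (intro exI[of _ "[w]"]) auto
next
  case (step j')
  have j1: "1 \<le> j'" using step.hyps j by simp
  from next_word_parts[OF ms j1 step.prems(1)] obtain \<pi> where
    p: "w = concat (map (\<lambda>i. ord j' ! (\<pi> (Suc i) - 1)) [0..<length (ord j')])"
       "\<forall>i<length (ord j'). \<pi> (Suc i) - 1 < length (ord j') \<and> 1 \<le> \<pi> (Suc i)" by blast
  have "\<forall>v\<in>set (ord j'). \<exists>ws. v = concat ws \<and> set ws \<subseteq> set (ord j)"
    using step.IH step.prems by blast
  then obtain F where F: "\<forall>v\<in>set (ord j'). v = concat (F v) \<and> set (F v) \<subseteq> set (ord j)"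
    by metis
  define vs where "vs = map (\<lambda>i. ord j' ! (\<pi> (Suc i) - 1)) [0..<length (ord j')]"
  have vs: "set vs \<subseteq> set (ord j')" using p(2) unfolding vs_def by auto
  have "w = concat (map (\<lambda>v. concat (F v)) vs)"
    using p(1) F vs unfolding vs_def[symmetric] by (metis (no_types, lifting) map_idI subsetD)
  also have "\<dots> = concat (concat (map F vs))" by (induction vs) auto
  finally show ?case using F vs by (intro exI[of _ "concat (map F vs)"]) auto
qed

lemma c1_facts:
  assumes ms: "marker_system l1 ord" and l3: "3 \<le> l1" and w: "w \<in> set (ord 1)"
  shows "length w = l1" "\<not> w!0" "\<not> w!1" "w!2" "only_prefix_00 w"
proof -
  have A: "length w = l1 \<and> take 3 w = [False, False, True] \<and> only_prefix_00 w"
    using ms w unfolding marker_system_def by blast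
  then show "length w = l1" "only_prefix_00 w" by auto
  have "take 3 w ! 0 = w ! 0" "take 3 w ! 1 = w ! 1" "take 3 w ! 2 = w ! 2" by simp_all
  then show "\<not> w!0" "\<not> w!1" "w!2" using A by auto
qed

lemma level1_marker:
  assumes ms: "marker_system l1 ord" and l3: "3 \<le> l1"
    and ph: "\<forall>k::int. seg x (r + k * int l1) l1 \<in> set (ord 1)"
    and z: "\<not> x z" "\<not> x (z+1)" "x (z+2)"
  shows "int l1 dvd z - r"
proof (rule ccontr)
  assume nd: "\<not> int l1 dvd z - r"
  define k where "k = (z - r) div int l1"
  define t where "t = nat ((z - r) mod int l1)"
  have lpos: "0 < int l1" using l3 by simp
  have tl: "t < l1" unfolding t_def using lpos by (simp add: nat_less_iff)
  have zeq: "z = r + k * int l1 + int t" unfolding k_def t_def using lpos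
    by (simp add: algebra_simps)
  have t0: "t \<noteq> 0" using nd unfolding t_def using lpos
    by (metis dvd_eq_mod_eq_0 nat_eq_iff2 of_nat_0 pos_mod_sign)
  define w where "w = seg x (r + k * int l1) l1"
  have w: "w \<in> set (ord 1)" unfolding w_def using ph by blast
  note wf = c1_facts[OF ms l3 w]
  have xt: "x z = w!t" unfolding w_def using tl zeq by simp
  show False
  proof (cases "Suc t < l1")
    case True
    have "x (z+1) = w!(Suc t)" unfolding w_def using True zeq by (simp add: algebra_simps)
    then have "t = 0" using wf(5) True xt z wf(1) unfolding only_prefix_00_def by auto
    then show False using t0 by simp
  next
    case False
    then have tt: "Suc t = l1" using tl by simp
    define v where "v = seg x (r + (k+1) * int l1) l1"
    have v: "v \<in> set (ord 1)" unfolding v_def using ph by blast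
    note vf = c1_facts[OF ms l3 v]
    have "z + 2 = r + (k+1) * int l1 + int 1" using zeq tt by (simp add: algebra_simps)
    then have "x (z+2) = v!1" unfolding v_def using l3 by (simp only: seg_nth)
    then show False using vf z by simp
  qed
qed

lemma level1_unique:
  assumes ms: "marker_system l1 ord" and l3: "3 \<le> l1"
    and ph: "\<forall>k::int. seg x (r + k * int l1) l1 \<in> set (ord 1)"
    and ph': "\<forall>k::int. seg x (r' + k * int l1) l1 \<in> set (ord 1)"
  shows "int l1 dvd r' - r"
proof -
  define w where "w = seg x r' l1"
  have w: "w \<in> set (ord 1)" unfolding w_def using ph'[rule_format, of 0] by simp
  note wf = c1_facts[OF ms l3 w]
  have "x r' = w!0" "x (r'+1) = w!1" "x (r'+2) = w!2" unfolding w_def using l3 by simp_all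
  then show ?thesis using level1_marker[OF ms l3 ph] wf by simp
qed

lemma block_parts:
  assumes ms: "marker_system l1 ord" and j: "1 \<le> j"
    and b: "seg x a (lev_len l1 ord (Suc j)) \<in> set (ord (Suc j))"
  shows "\<exists>\<pi>. \<pi> 1 = 1 \<and> inj \<pi> \<and> (\<forall>i<length (ord j).
     seg x (a + int (i * lev_len l1 ord j)) (lev_len l1 ord j) = ord j ! (\<pi> (Suc i) - 1)
     \<and> \<pi> (Suc i) - 1 < length (ord j) \<and> 1 \<le> \<pi> (Suc i))"
proof -
  from next_word_parts[OF ms j b] obtain \<pi> where
    p: "\<pi> permutes {1..length (ord j)}" "\<pi> 1 = 1"
     "seg x a (lev_len l1 ord (Suc j)) = concat (map (\<lambda>i. ord j ! (\<pi> (Suc i) - 1)) [0..<length (ord j)])"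
     "\<forall>i<length (ord j). \<pi> (Suc i) - 1 < length (ord j) \<and> 1 \<le> \<pi> (Suc i)" by blast
  define ws where "ws = map (\<lambda>i. ord j ! (\<pi> (Suc i) - 1)) [0..<length (ord j)]"
  have lws: "length ws = length (ord j)" unfolding ws_def by simp
  have wl: "\<forall>v\<in>set ws. length v = lev_len l1 ord j"
    using p(4) ms_len[OF ms j] unfolding ws_def by auto
  have sc: "seg x a (length ws * lev_len l1 ord j) = concat ws"
    using p(3) lev_Suc[OF j, of l1 ord] lws unfolding ws_def by (simp add: mult.commute)
  have "\<forall>i<length (ord j). seg x (a + int (i * lev_len l1 ord j)) (lev_len l1 ord j) = ord j ! (\<pi> (Suc i) - 1)"
    using seg_concat[OF wl sc] lws unfolding ws_def by simp
  then show ?thesis using p permutes_inj[OF p(1)] by blast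
qed

lemma phase_down:
  assumes ms: "marker_system l1 ord" and j: "1 \<le> j"
    and ph: "\<forall>k::int. seg x (r + k * int (lev_len l1 ord (Suc j))) (lev_len l1 ord (Suc j)) \<in> set (ord (Suc j))"
  shows "\<forall>k::int. seg x (r + k * int (lev_len l1 ord j)) (lev_len l1 ord j) \<in> set (ord j)"
proof
  fix k0 :: int
  define N where "N = length (ord j)"
  define l where "l = lev_len l1 ord j"
  have Npos: "0 < int N" using ms_nonempty[OF ms j] unfolding N_def by (auto simp: Suc_le_eq)
  define k where "k = k0 div int N"
  define i where "i = nat (k0 mod int N)"
  have iN: "i < N" unfolding i_def using Npos by (simp add: nat_less_iff)
  have k0: "k0 = k * int N + int i" unfolding k_def i_def using Npos by simp
  have L: "lev_len l1 ord (Suc j) = l * N" unfolding l_def N_def using lev_Suc[OF j] .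
  have eq: "r + k0 * int l = (r + k * int (lev_len l1 ord (Suc j))) + int (i * l)"
    unfolding L k0 by (simp add: algebra_simps)
  from block_parts[OF ms j ph[rule_format, of k]] obtain \<pi> where
    p: "\<forall>i<N. seg x (r + k * int (lev_len l1 ord (Suc j)) + int (i * l)) l = ord j ! (\<pi> (Suc i) - 1)
     \<and> \<pi> (Suc i) - 1 < N" unfolding N_def l_def by blast
  show "seg x (r + k0 * int (lev_len l1 ord j)) (lev_len l1 ord j) \<in> set (ord j)"
    using p iN unfolding eq[unfolded l_def] l_def[symmetric] N_def by (metis nth_mem eq l_def)
qed

lemma phase_unique:
  assumes ms: "marker_system l1 ord" and l3: "3 \<le> l1" and j: "1 \<le> j"
  shows "\<forall>r r'. (\<forall>k::int. seg x (r + k * int (lev_len l1 ord j)) (lev_len l1 ord j) \<in> set (ord j)) \<longrightarrow>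
      (\<forall>k::int. seg x (r' + k * int (lev_len l1 ord j)) (lev_len l1 ord j) \<in> set (ord j)) \<longrightarrow>
      int (lev_len l1 ord j) dvd r' - r"
  using j
proof (induction j rule: dec_induct)
  case base
  then show ?case using level1_unique[OF ms l3] lev_1[of l1 ord] by simp
next
  case (step j)
  show ?case
  proof (intro allI impI)
    fix r r' :: int
    assume ph: "\<forall>k::int. seg x (r + k * int (lev_len l1 ord (Suc j))) (lev_len l1 ord (Suc j)) \<in> set (ord (Suc j))"
      and ph': "\<forall>k::int. seg x (r' + k * int (lev_len l1 ord (Suc j))) (lev_len l1 ord (Suc j)) \<in> set (ord (Suc j))"
    have j: "1 \<le> j" using step.hyps by simp
    define N where "N = length (ord j)"
    define l where "l = lev_len l1 ord j"
    have Npos: "0 < int N" using ms_nonempty[OF ms j] unfolding N_def by (auto simp: Suc_le_eq)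
    have L: "lev_len l1 ord (Suc j) = l * N" unfolding l_def N_def using lev_Suc[OF j] .
    have "int l dvd r' - r" unfolding l_def
      using step.IH phase_down[OF ms j ph] phase_down[OF ms j ph'] by blast
    then obtain q where q: "r' - r = int l * q" by (metis dvdE)
    define k where "k = q div int N"
    define m where "m = nat (q mod int N)"
    have mN: "m < N" unfolding m_def using Npos by (simp add: nat_less_iff)
    have qe: "q = k * int N + int m" unfolding k_def m_def using Npos by simp
    have r'eq: "r' = (r + k * int (lev_len l1 ord (Suc j))) + int (m * l)"
      using q unfolding L qe by (simp add: algebra_simps)
    from block_parts[OF ms j ph[rule_format, of k]] obtain \<pi> where
      p: "inj \<pi>" "\<pi> 1 = 1" "\<forall>i<N. seg x (r + k * int (lev_len l1 ord (Suc j)) + int (i * l)) l = ord j ! (\<pi> (Suc i) - 1)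
       \<and> \<pi> (Suc i) - 1 < N \<and> 1 \<le> \<pi> (Suc i)" unfolding N_def l_def by blast
    from block_parts[OF ms j ph'[rule_format, of 0]] obtain \<pi>' where
      p': "\<pi>' 1 = 1" "\<forall>i<N. seg x (r' + 0 * int (lev_len l1 ord (Suc j)) + int (i * l)) l = ord j ! (\<pi>' (Suc i) - 1)"
      unfolding N_def l_def by blast
    have "seg x r' l = ord j ! 0" using p'(1) p'(2)[rule_format, of 0] Npos by simp
    moreover have "seg x r' l = ord j ! (\<pi> (Suc m) - 1)" using p(3) mN r'eq by simp
    moreover have "distinct (ord j)" using ms j unfolding marker_system_def by blast
    ultimately have "\<pi> (Suc m) - 1 = 0" using p(3) mN Npos unfolding N_def
      by (metis nth_eq_iff_index_eq of_nat_0_less_iff)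
    then have "\<pi> (Suc m) = \<pi> 1" using p(2) p(3) mN by (metis One_nat_def le_antisym not_less_eq_eq diff_is_0_eq)
    then have "m = 0" using p(1) by (simp add: inj_eq)
    then have "r' - r = k * int (lev_len l1 ord (Suc j))" using r'eq by simp
    then show "int (lev_len l1 ord (Suc j)) dvd r' - r" by simp
  qed
qed

lemma window_phase:
  assumes l: "0 < l" and w: "w = p @ seg x a n @ s" and wc: "w = concat ws"
    and wl: "\<forall>v\<in>set ws. length v = l" and wS: "set ws \<subseteq> S"
  shows "\<exists>r. 0 \<le> r \<and> r < int l \<and> (\<forall>k::int. a \<le> r + k * int l \<and> r + k * int l + int l \<le> a + int n
             \<longrightarrow> seg x (r + k * int l) l \<in> S)"
proof -
  define P where "P = length p"
  define r where "r = (a - int P) mod int l"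
  have r0: "0 \<le> r" "r < int l" unfolding r_def using l by simp_all
  have rdec: "a - int P = int l * ((a - int P) div int l) + r" unfolding r_def by simp
  have "\<forall>k::int. a \<le> r + k * int l \<and> r + k * int l + int l \<le> a + int n \<longrightarrow> seg x (r + k * int l) l \<in> S"
  proof (intro allI impI)
    fix k :: int
    assume kk: "a \<le> r + k * int l \<and> r + k * int l + int l \<le> a + int n"
    define t where "t = nat (r + k * int l - a)"
    have tI: "int t = r + k * int l - a" unfolding t_def using kk by simp
    have tn: "t + l \<le> n" using kk tI by linarith
    define i where "i = nat (k - (a - int P) div int l)"
    have "int (P + t) = int l * (k - (a - int P) div int l)"
      using tI rdec by (simp add: algebra_simps)
    moreover have "0 \<le> k - (a - int P) div int l"
      using calculation l by (metis of_nat_0_le_iff zero_le_mult_iff of_nat_0_less_iff not_le order_less_imp_le)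
    ultimately have Pti: "P + t = i * l" unfolding i_def
      by (metis (mono_tags, lifting) mult.commute nat_int nat_mult_distrib of_nat_0_le_iff nat_int)
    have lenw: "length w = length ws * l" using wc wl length_concat_uniform by blast
    have "length w = P + n + length s" using w unfolding P_def by simp
    then have "i * l + l \<le> length ws * l" using lenw Pti tn by linarith
    then have ilt: "i < length ws" using l
      by (metis add_lessD1 less_le_trans mult_less_cancel2 less_add_same_cancel1 le_eq_less_or_eq mult_Suc less_eq_Suc_le not_less)
    have sg: "seg x a n = take n (drop P w)" unfolding w P_def by simp
    have "seg x (r + k * int l) l = seg x (a + int t) l" using tI by simp
    also have "\<dots> = take l (drop t (seg x a n))" using seg_sub[OF tn] .
    also have "\<dots> = take l (drop (P + t) w)" unfolding sg using tn
      by (simp add: drop_take min_def add.commute)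
    also have "\<dots> = ws ! i" unfolding Pti wc using concat_block[OF wl ilt] .
    finally show "seg x (r + k * int l) l \<in> S" using ilt wS by auto
  qed
  then show ?thesis using r0 by blast
qed

lemma phase_exists:
  assumes ms: "marker_system l1 ord" and l3: "3 \<le> l1" and x: "x \<in> marker_subshift ord" and j: "1 \<le> j"
  shows "\<exists>r. 0 \<le> r \<and> r < int (lev_len l1 ord j) \<and>
     (\<forall>k::int. seg x (r + k * int (lev_len l1 ord j)) (lev_len l1 ord j) \<in> set (ord j))"
proof -
  define l where "l = lev_len l1 ord j"
  have lpos: "0 < l" unfolding l_def using lev_pos[OF ms _ j] l3 by simp
  define G where "G n r \<longleftrightarrow> 0 \<le> r \<and> r < int l \<and> (\<forall>k::int. - int n \<le> r + k * int l \<and>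
      r + k * int l + int l \<le> - int n + int (2*n) \<longrightarrow> seg x (r + k * int l) l \<in> set (ord j))" for n r
  have ex: "\<exists>r. G n r" if n: "l < n" for n
  proof -
    obtain j' w p s where j': "1 \<le> j'" and w: "w \<in> set (ord j')" and we: "w = p @ seg x (- int n) (2*n) @ s"
      using x unfolding marker_subshift_def by blast
    have lw: "length w = lev_len l1 ord j'" using ms_len[OF ms j' w] .
    have "2*n \<le> length w" using we by simp
    have jj: "j \<le> j'"
    proof (rule ccontr)
      assume "\<not> j \<le> j'"
      then have "lev_len l1 ord j' \<le> l" using lev_mono[OF ms j', of j] unfolding l_def by simp
      then show False using lw n \<open>2*n \<le> length w\<close> by linarith
    qed
    obtain ws where ws: "w = concat ws" "set ws \<subseteq> set (ord j)" using decomp[OF ms j jj w] by blast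
    have wl: "\<forall>v\<in>set ws. length v = l" using ws(2) ms_len[OF ms j] unfolding l_def by auto
    show ?thesis using window_phase[OF lpos we ws(1) wl ws(2)] unfolding G_def by blast
  qed
  define f where "f n = (SOME r. G n r)" for n
  have fG: "G n (f n)" if "l < n" for n unfolding f_def using ex[OF that] by (rule someI_ex)
  define A where "A = {n. l < n}"
  have "\<forall>m. \<exists>n\<ge>m. n \<in> A"
  proof
    fix m show "\<exists>n\<ge>m. n \<in> A" by (rule exI[of _ "m+l+1"]) (simp add: A_def)
  qed
  then have infA: "\<not> finite A" by (simp add: infinite_nat_iff_unbounded_le)
  have "f ` A \<subseteq> {0..<int l}" using fG unfolding A_def G_def by auto
  then have finf: "finite (f ` A)" by (rule finite_subset) simp
  obtain a0 where a0: "a0 \<in> A" "\<not> finite {a\<in>A. f a = f a0}" using pigeonhole_infinite[OF infA finf] by blast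
  define r where "r = f a0"
  have r: "0 \<le> r" "r < int l" using fG a0(1) unfolding r_def A_def G_def by auto
  have "seg x (r + k * int l) l \<in> set (ord j)" for k
  proof -
    obtain n where n: "n \<ge> nat \<bar>r + k * int l\<bar> + l" "n \<in> {a\<in>A. f a = f a0}"
      using a0(2) unfolding infinite_nat_iff_unbounded_le by blast
    have G: "G n r" using fG n(2) unfolding A_def r_def by (metis (mono_tags, lifting) mem_Collect_eq)
    have "- int n \<le> r + k * int l \<and> r + k * int l + int l \<le> - int n + int (2*n)" using n(1) by linarith
    then show ?thesis using G unfolding G_def by blast
  qed
  then show ?thesis using r unfolding l_def by blast
qed

theorem lemma4p2:
  shows "\<exists>L. \<forall>l1 ord. L \<le> l1 \<longrightarrow> marker_system l1 ord \<longrightarrow>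
     (\<forall>x\<in>marker_subshift ord. \<forall>j\<ge>1.
        \<exists>!r. r < lev_len l1 ord j \<and>
             (\<forall>k::int. seg x (int r + k * int (lev_len l1 ord j)) (lev_len l1 ord j) \<in> set (ord j)))"
proof (intro exI[of _ 3] allI impI ballI)
  fix l1 ord x j
  assume l3: "3 \<le> l1" and ms: "marker_system l1 ord" and x: "x \<in> marker_subshift ord" and j: "1 \<le> (j::nat)"
  define l where "l = lev_len l1 ord j"
  obtain r where r: "0 \<le> r" "r < int l" "\<forall>k::int. seg x (r + k * int l) l \<in> set (ord j)"
    using phase_exists[OF ms l3 x j] unfolding l_def by blast
  show "\<exists>!r. r < l \<and> (\<forall>k::int. seg x (int r + k * int l) l \<in> set (ord j))"
  proof (rule ex1I[of _ "nat r"])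
    show "nat r < l \<and> (\<forall>k::int. seg x (int (nat r) + k * int l) l \<in> set (ord j))" using r by auto
  next
    fix r' assume r': "r' < l \<and> (\<forall>k::int. seg x (int r' + k * int l) l \<in> set (ord j))"
    have "int l dvd int r' - r" using phase_unique[OF ms l3 j] r(3) r' unfolding l_def by blast
    then obtain q where q: "int r' - r = int l * q" by (metis dvdE)
    have "q = 0"
    proof (rule ccontr)
      assume "q \<noteq> 0"
      then have "1 \<le> \<bar>q\<bar>" by simp
      then have "int l * 1 \<le> int l * \<bar>q\<bar>" by (rule mult_left_mono) simp
      then have "\<bar>int l * q\<bar> \<ge> int l" by (simp add: abs_mult)
      then show False using q r r' by linarith
    qed
    then show "r' = nat r" using q by simp
  qed
qed

end
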